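(* Let $X=([0,2]_{\mathbb{Z}}\times[0,2]_{\mathbb{Z}})\cup([2,4]_{\mathbb{Z}}\times[0,3]_{\mathbb{Z}})\subset\mathbb{Z}^2$. Then $$A'=\{(0,0),(4,0),(4,3),(2,3),(0,2)\}$$ is a minimal freezing set for $(X,c_1)$.
   Context: $[a,b]_{\mathbb{Z}}=\{k\in\mathbb{Z}: a\le k\le b\}$. For $x\neq y$ in $\mathbb{Z}^2$, $x,y$ are $c_1$-adjacent if they differ by 1 in exactly one coordinate and agree in the other. $f:X\to X$ is $c_1$-continuous ($f\in C(X,c_1)$) if whenever $x,x'$ are $c_1$-adjacent, $f(x)$ and $f(x')$ are equal or $c_1$-adjacent. $\mathrm{Fix}(f)=\{x:f(x)=x\}$. $A\subset X$ is a freezing set for $(X,c_1)$ if every $f\in C(X,c_1)$ with $A\subset\mathrm{Fix}(f)$ is the identity on $X$; it is minimal if no proper subset of $A$ is a freezing set. *)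

theory Defs
  imports Main
begin

type_synonym pt = "int \<times> int"

definition c1_adj :: "pt \<Rightarrow> pt \<Rightarrow> bool" where
  "c1_adj x y \<longleftrightarrow> x \<noteq> y \<and>
     ((fst x = fst y \<and> \<bar>snd x - snd y\<bar> = 1) \<or> (snd x = snd y \<and> \<bar>fst x - fst y\<bar> = 1))"

text \<open>Continuous self-maps of (X, c1); only values on X matter.\<close>
definition c1_continuous :: "pt set \<Rightarrow> (pt \<Rightarrow> pt) \<Rightarrow> bool" where
  "c1_continuous X f \<longleftrightarrow> (\<forall>x\<in>X. f x \<in> X) \<and>
     (\<forall>x\<in>X. \<forall>y\<in>X. c1_adj x y \<longrightarrow> (f x = f y \<or> c1_adj (f x) (f y)))"

definition freezing_set :: "pt set \<Rightarrow> pt set \<Rightarrow> bool" where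
  "freezing_set X A \<longleftrightarrow> A \<subseteq> X \<and>
     (\<forall>f. c1_continuous X f \<longrightarrow> (\<forall>a\<in>A. f a = a) \<longrightarrow> (\<forall>x\<in>X. f x = x))"

definition minimal_freezing_set :: "pt set \<Rightarrow> pt set \<Rightarrow> bool" where
  "minimal_freezing_set X A \<longleftrightarrow> freezing_set X A \<and> (\<forall>B. B \<subset> A \<longrightarrow> \<not> freezing_set X B)"

end

theory Submission
  imports Defs
begin

definition L1 :: "pt \<Rightarrow> pt \<Rightarrow> int" where
  "L1 p c = \<bar>fst p - fst c\<bar> + \<bar>snd p - snd c\<bar>"

lemma adj_L1: "f = g \<or> c1_adj f g \<Longrightarrow> L1 f c \<le> L1 g c + 1"
  unfolding c1_adj_def L1_def by auto

lemma dist_bound: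
  assumes cont: "c1_continuous X f" and fc: "f c = c"
    and step: "\<forall>p\<in>X. p \<noteq> c \<longrightarrow> (\<exists>q\<in>X. c1_adj p q \<and> L1 q c + 1 = L1 p c)"
  shows "p \<in> X \<Longrightarrow> L1 (f p) c \<le> L1 p c"
proof (induction "nat (L1 p c)" arbitrary: p rule: less_induct)
  case less
  show ?case
  proof (cases "p = c")
    case True then show ?thesis using fc by (simp add: L1_def)
  next
    case False
    then obtain q where q: "q \<in> X" "c1_adj p q" "L1 q c + 1 = L1 p c"
      using step less.prems by blast
    have "0 \<le> L1 q c" by (simp add: L1_def)
    then have "nat (L1 q c) < nat (L1 p c)" using q(3) by linarith
    then have IH: "L1 (f q) c \<le> L1 q c" using less.hyps q(1) by blast
    have "f p = f q \<or> c1_adj (f p) (f q)"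
      using cont q less.prems unfolding c1_continuous_def by blast
    then have "L1 (f p) c \<le> L1 (f q) c + 1" by (rule adj_L1)
    then show ?thesis using IH q(3) by linarith
  qed
qed

abbreviation XX :: "pt set" where
  "XX \<equiv> ({0..2} \<times> {0..2}) \<union> ({2..4} \<times> {0..3})"

lemma X_eq: "XX = {(0,0),(0,1),(0,2),(1,0),(1,1),(1,2),(2,0),(2,1),(2,2),(2,3),
   (3,0),(3,1),(3,2),(3,3),(4,0),(4,1),(4,2),(4,3)}"
proof -
  have a: "{0..2::int} = {0,1,2}" by auto
  have b: "{2..4::int} = {2,3,4}" by auto
  have c: "{0..3::int} = {0,1,2,3}" by auto
  show ?thesis unfolding a b c by auto
qed

lemma step_c:
  assumes "c \<in> {(0,0),(4,3),(4,0),(0,2)}"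
  shows "\<forall>p\<in>XX. p \<noteq> c \<longrightarrow> (\<exists>q\<in>XX. c1_adj p q \<and> L1 q c + 1 = L1 p c)"
  using assms unfolding X_eq by (auto simp: c1_adj_def L1_def)

lemma freezing: "freezing_set XX {(0,0), (4,0), (4,3), (2,3), (0,2)}"
  unfolding freezing_set_def
proof (intro conjI allI impI ballI)
  show "{(0,0), (4,0), (4,3), (2,3), (0,2)} \<subseteq> XX" by auto
next
  fix f p
  assume cont: "c1_continuous XX f" and fx: "\<forall>a\<in>{(0::int,0::int), (4,0), (4,3), (2,3), (0,2)}. f a = a"
    and pX: "p \<in> XX"
  have fX: "\<And>q. q \<in> XX \<Longrightarrow> f q \<in> XX" using cont unfolding c1_continuous_def by blast
  have gen: "\<And>q. q \<in> XX \<Longrightarrow> f q = q \<or> snd q = 3"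
  proof -
    fix q assume qX: "q \<in> XX"
    have d1: "L1 (f q) (0,0) \<le> L1 q (0,0)"
      by (rule dist_bound[OF cont _ step_c qX]) (use fx in auto)
    have d2: "L1 (f q) (4,3) \<le> L1 q (4,3)"
      by (rule dist_bound[OF cont _ step_c qX]) (use fx in auto)
    have d3: "L1 (f q) (4,0) \<le> L1 q (4,0)"
      by (rule dist_bound[OF cont _ step_c qX]) (use fx in auto)
    have d4: "L1 (f q) (0,2) \<le> L1 q (0,2)"
      by (rule dist_bound[OF cont _ step_c qX]) (use fx in auto)
    obtain x y where q: "q = (x,y)" by fastforce
    obtain x' y' where fq: "f q = (x',y')" by fastforce
    have b1: "0 \<le> x \<and> x \<le> 4 \<and> 0 \<le> y \<and> y \<le> 3" using qX q by auto
    have b2: "0 \<le> x' \<and> x' \<le> 4 \<and> 0 \<le> y' \<and> y' \<le> 3" using fX[OF qX] fq by auto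
    show "f q = q \<or> snd q = 3"
      using d1 d2 d3 d4 b1 b2 unfolding fq unfolding q L1_def by (auto simp: abs_if split: if_splits)
  qed
  show "f p = p"
  proof (cases "snd p = 3")
    case False then show ?thesis using gen pX by blast
  next
    case True
    then have "p = (2,3) \<or> p = (3,3) \<or> p = (4,3)" using pX by auto
    moreover have "f (3,3) = (3,3)"
    proof -
      have m: "(3::int,3::int) \<in> XX" by auto
      have d1: "L1 (f (3,3)) (0,0) \<le> 6"
        using dist_bound[OF cont _ step_c m, of "(0,0)"] fx by (auto simp: L1_def)
      have d2: "L1 (f (3,3)) (4,3) \<le> 1"
        using dist_bound[OF cont _ step_c m, of "(4,3)"] fx by (auto simp: L1_def)
      have a: "f (3,3) = f (2,3) \<or> c1_adj (f (3,3)) (f (2,3))"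
        using cont m unfolding c1_continuous_def by (auto simp: c1_adj_def)
      obtain x' y' where fq: "f (3,3) = (x',y')" by fastforce
      have b2: "0 \<le> x' \<and> x' \<le> 4 \<and> 0 \<le> y' \<and> y' \<le> 3" using fX[OF m] fq by auto
      show ?thesis using d1 d2 a b2 fx unfolding fq L1_def c1_adj_def by (auto simp: abs_if split: if_splits)
    qed
    ultimately show ?thesis using fx by auto
  qed
qed

lemma cont0: "c1_continuous XX (id((0,0) := (1,1)))"
  unfolding c1_continuous_def X_eq by (simp add: c1_adj_def)

lemma cont1: "c1_continuous XX (id((4,0) := (3,1)))"
  unfolding c1_continuous_def X_eq by (simp add: c1_adj_def)

lemma cont2: "c1_continuous XX (id((4,3) := (3,2)))"
  unfolding c1_continuous_def X_eq by (simp add: c1_adj_def)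

lemma cont3: "c1_continuous XX (id((2,3) := (3,2)))"
  unfolding c1_continuous_def X_eq by (simp add: c1_adj_def)

lemma cont4: "c1_continuous XX (id((0,2) := (1,1)))"
  unfolding c1_continuous_def X_eq by (simp add: c1_adj_def)

lemma nf_witness: "c1_continuous XX g \<Longrightarrow> a \<in> XX \<Longrightarrow> g a \<noteq> a \<Longrightarrow> \<forall>b\<in>B. g b = b \<Longrightarrow> \<not> freezing_set XX B"
  unfolding freezing_set_def by blast

theorem mainTheorem3:
  shows "minimal_freezing_set
     (({0..2} \<times> {0..2}) \<union> ({2..4} \<times> {0..3}))
     {(0,0), (4,0), (4,3), (2,3), (0,2)}"
  unfolding minimal_freezing_set_def
proof (intro conjI allI impI)
  show "freezing_set XX {(0,0), (4,0), (4,3), (2,3), (0,2)}" by (rule freezing)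
next
  fix B assume B: "B \<subset> {(0::int,0::int), (4,0), (4,3), (2,3), (0,2)}"
  then obtain a where a: "a \<in> {(0::int,0::int), (4,0), (4,3), (2,3), (0,2)}" "a \<notin> B" by blast
  have sub: "B \<subseteq> {(0::int,0::int), (4,0), (4,3), (2,3), (0,2)} - {a}" using B a by blast
  show "\<not> freezing_set XX B"
    using a(1)
  proof (elim insertE)
    assume "a = (0,0)"
    show ?thesis
      by (rule nf_witness[OF cont0, of "(0,0)"]) (use sub \<open>a = (0,0)\<close> in auto)
  next
    assume "a = (4,0)"
    show ?thesis
      by (rule nf_witness[OF cont1, of "(4,0)"]) (use sub \<open>a = (4,0)\<close> in auto)
  next
    assume "a = (4,3)"
    show ?thesis
      by (rule nf_witness[OF cont2, of "(4,3)"]) (use sub \<open>a = (4,3)\<close> in auto)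
  next
    assume "a = (2,3)"
    show ?thesis
      by (rule nf_witness[OF cont3, of "(2,3)"]) (use sub \<open>a = (2,3)\<close> in auto)
  next
    assume "a = (0,2)"
    show ?thesis
      by (rule nf_witness[OF cont4, of "(0,2)"]) (use sub \<open>a = (0,2)\<close> in auto)
  next
    assume "a \<in> {}" then show ?thesis by simp
  qed
qed

end
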